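(* Let $m$ be a positive integer and $\mathcal{U}=\{S_0,S_{2,1^0},\ldots,S_{2,1^{m-1}}\}$. Define the following vectors $(y_0,\ldots,y_m)\in\mathbb{R}^{m+1}$ (where a vector is only defined when its index range for $i$ is nonempty, and $k$ ranges over $0,\ldots,m$): $\mathbf{s}_{1,m}$: $y_0=3,y_1=6$, $y_k=\max(3k,2k+4)$ for $k\ge2$ (i.e. $(3,6,8,10,12,15,\ldots,3m)$); $\mathbf{s}_{2,m}$: $y_0=6,y_1=12,y_2=16$, $y_k=6k+3$ for $k\ge3$; $\mathbf{s}_{3,m}$: $y_0=2,y_1=4,y_2=5$, $y_k=2k$ for $k\ge3$; $\mathbf{s}_{4,m}$: $y_0=3,y_1=6,y_2=8$, $y_k=3k+1$ for $k\ge3$; $\mathbf{r}_{1,m,i}$ ($5\le i\le m-1$): $y_0=6i-15,y_1=12i-30,y_2=16i-40$, $y_k=(6i-18)k+3i$ for $3\le k\le i$, $y_k=(6i-15)k$ for $k\ge i$; $\mathbf{r}_{2,m,i}$ ($5\le i\le m-1$): $y_0=i+2$, $y_k=i(k+2)$ for $1\le k\le i$, $y_k=(i+2)k$ for $k\ge i$; $\mathbf{r}_{3,m,i}$ ($5\le i\le m-1$): $y_0=3i-9,y_1=6i-18,y_2=8i-24$, $y_k=(3i-10)k+i$ for $3\le k\le i$, $y_k=(3i-9)k$ for $k\ge i$; $\mathbf{r}_{4,m,i}$ ($5\le i\le m-1$): $y_0=2i-5,y_1=4i-10$, $y_k=(2i-6)k+i$ for $2\le k\le i$, $y_k=(2i-5)k$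 for $k\ge i$; $\mathbf{r}_{5,m,i}$ ($3\le i\le m-1$): $y_k=\max(i,k)$ for all $k$; $\mathbf{r}_{6,m,i}$ ($4\le i\le m-1$): $y_0=i+1,y_1=3i-1$, $y_k=(i-1)k+2i$ for $2\le k\le i$, $y_k=(i+1)k$ for $k\ge i$. Then all of $\mathbf{s}_{j,m}$ ($1\le j\le4$) and $\mathbf{r}_{l,m,i}$ ($1\le l\le6$, $i$ in the stated range) lie in $\operatorname{trop}(\mathcal{N}_{\mathcal{U}})$.
   Context: All graphs are finite; $\hom(H;G)$ is the number of graph homomorphisms from $H$ to $G$. $S_0$ is a single vertex; for $k\ge0$, $S_{2,1^k}$ is the tree with vertex set $\{1,\ldots,k+3\}$ and edge set $\{\{1,j\}:2\le j\le k+2\}\cup\{\{k+2,k+3\}\}$. $\mathcal{N}_{\mathcal{U}}$ is the set of vectors $(\hom(S_0;G),\hom(S_{2,1^0};G),\ldots,\hom(S_{2,1^{m-1}};G))$ over all graphs $G$; $\operatorname{trop}(\mathcal{N}_{\mathcal{U}})$ is the closure of the conical hull of the coordinatewise logarithms of the points of $\mathcal{N}_{\mathcal{U}}$ with all coordinates positive (equivalently $\lim_{\tau\to\infty}\log_\tau$ of that set). *)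

theory Defs
  imports "HOL-Analysis.Analysis"
begin

text \<open>A graph is a pair (V, E) of a vertex set of natural numbers and an adjacency
  relation. Every finite graph is isomorphic to one of this form.\<close>

type_synonym graph = "nat set \<times> (nat \<Rightarrow> nat \<Rightarrow> bool)"

definition simple_graph :: "graph \<Rightarrow> bool" where
  "simple_graph G \<longleftrightarrow> finite (fst G) \<and>
     (\<forall>u v. snd G u v \<longrightarrow> u \<in> fst G \<and> v \<in> fst G \<and> snd G v u \<and> u \<noteq> v)"

definition homs :: "graph \<Rightarrow> graph \<Rightarrow> (nat \<Rightarrow> nat) set" where
  "homs H G = {f \<in> fst H \<rightarrow>\<^sub>E fst G. \<forall>u v. snd H u v \<longrightarrow> snd G (f u) (f v)}"

definition hom_count :: "graph \<Rightarrow> graph \<Rightarrow> nat" where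
  "hom_count H G = card (homs H G)"

definition S0 :: graph where
  "S0 = ({1}, \<lambda>u v. False)"

definition S21 :: "nat \<Rightarrow> graph" where
  "S21 k = ({1..k+3}, \<lambda>u v.
      (u = 1 \<and> 2 \<le> v \<and> v \<le> k+2) \<or> (v = 1 \<and> 2 \<le> u \<and> u \<le> k+2) \<or>
      (u = k+2 \<and> v = k+3) \<or> (u = k+3 \<and> v = k+2))"

text \<open>A vector (y_0,...,y_m) in R^{m+1} is represented as a function nat => real
  that vanishes at indices > m; the topology on nat => real is the product topology,
  which on such vectors agrees with the Euclidean one.\<close>

definition trunc_vec :: "nat \<Rightarrow> (nat \<Rightarrow> real) \<Rightarrow> nat \<Rightarrow> real" where
  "trunc_vec m y = (\<lambda>k. if k \<le> m then y k else 0)"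

definition hom_vec :: "nat \<Rightarrow> graph \<Rightarrow> nat \<Rightarrow> real" where
  "hom_vec m G = trunc_vec m (\<lambda>k. if k = 0 then real (hom_count S0 G)
                                  else real (hom_count (S21 (k - 1)) G))"

definition N_U :: "nat \<Rightarrow> (nat \<Rightarrow> real) set" where
  "N_U m = {hom_vec m G | G. simple_graph G}"

definition log_vec :: "nat \<Rightarrow> (nat \<Rightarrow> real) \<Rightarrow> nat \<Rightarrow> real" where
  "log_vec m x = trunc_vec m (\<lambda>k. ln (x k))"

definition conical_hull :: "(nat \<Rightarrow> real) set \<Rightarrow> (nat \<Rightarrow> real) set" where
  "conical_hull A = {x. \<exists>F c. finite F \<and> F \<subseteq> A \<and> (\<forall>v\<in>F. 0 \<le> c v) \<and>
                         x = (\<lambda>k. \<Sum>v\<in>F. c v * v k)}"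

definition trop_N_U :: "nat \<Rightarrow> (nat \<Rightarrow> real) set" where
  "trop_N_U m = closure (conical_hull
      (log_vec m ` {x \<in> N_U m. \<forall>k\<le>m. 0 < x k}))"

definition s1 :: "nat \<Rightarrow> real" where
  "s1 k = (if k = 0 then 3 else if k = 1 then 6 else max (3 * real k) (2 * real k + 4))"

definition s2 :: "nat \<Rightarrow> real" where
  "s2 k = (if k = 0 then 6 else if k = 1 then 12 else if k = 2 then 16 else 6 * real k + 3)"

definition s3 :: "nat \<Rightarrow> real" where
  "s3 k = (if k = 0 then 2 else if k = 1 then 4 else if k = 2 then 5 else 2 * real k)"

definition s4 :: "nat \<Rightarrow> real" where
  "s4 k = (if k = 0 then 3 else if k = 1 then 6 else if k = 2 then 8 else 3 * real k + 1)"

definition r1 :: "nat \<Rightarrow> nat \<Rightarrow> real" where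
  "r1 i k = (if k = 0 then 6 * real i - 15 else if k = 1 then 12 * real i - 30
             else if k = 2 then 16 * real i - 40
             else if k \<le> i then (6 * real i - 18) * real k + 3 * real i
             else (6 * real i - 15) * real k)"

definition r2 :: "nat \<Rightarrow> nat \<Rightarrow> real" where
  "r2 i k = (if k = 0 then real i + 2
             else if k \<le> i then real i * (real k + 2)
             else (real i + 2) * real k)"

definition r3 :: "nat \<Rightarrow> nat \<Rightarrow> real" where
  "r3 i k = (if k = 0 then 3 * real i - 9 else if k = 1 then 6 * real i - 18
             else if k = 2 then 8 * real i - 24
             else if k \<le> i then (3 * real i - 10) * real k + real i
             else (3 * real i - 9) * real k)"

definition r4 :: "nat \<Rightarrow> nat \<Rightarrow> real" where
  "r4 i k = (if k = 0 then 2 * real i - 5 else if k = 1 then 4 * real i - 10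
             else if k \<le> i then (2 * real i - 6) * real k + real i
             else (2 * real i - 5) * real k)"

definition r5 :: "nat \<Rightarrow> nat \<Rightarrow> real" where
  "r5 i k = max (real i) (real k)"

definition r6 :: "nat \<Rightarrow> nat \<Rightarrow> real" where
  "r6 i k = (if k = 0 then real i + 1 else if k = 1 then 3 * real i - 1
             else if k \<le> i then (real i - 1) * real k + 2 * real i
             else (real i + 1) * real k)"

end

theory Submission
  imports Defs
begin


definition nbr :: "graph \<Rightarrow> nat \<Rightarrow> nat set" where
  "nbr G v = {w \<in> fst G. snd G v w}"

definition dg :: "graph \<Rightarrow> nat \<Rightarrow> nat" where
  "dg G v = card (nbr G v)"

lemma hom_S0: "hom_count S0 G = card (fst G)"
proof -
  have "homs S0 G = {1} \<rightarrow>\<^sub>E fst G" by (auto simp: homs_def S0_def)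
  then show ?thesis by (simp add: hom_count_def card_PiE)
qed

lemma hom_S21:
  assumes sg: "simple_graph G"
  shows "hom_count (S21 k) G = (\<Sum>v\<in>fst G. dg G v ^ k * (\<Sum>w\<in>nbr G v. dg G w))"
proof -
  obtain V A where G: "G = (V, A)" by (cases G)
  have fin: "finite V" using sg G by (simp add: simple_graph_def)
  have sym: "\<And>u v. A u v \<Longrightarrow> A v u" and inV: "\<And>u v. A u v \<Longrightarrow> u \<in> V \<and> v \<in> V"
    using sg G by (auto simp: simple_graph_def)
  define N where "N v = {w \<in> V. A v w}" for v
  have finN: "finite (N v)" for v using fin by (simp add: N_def)
  define S where "S = (SIGMA v:V. SIGMA w:N v. N w \<times> ({2..k+1} \<rightarrow>\<^sub>E N v))"
  define \<phi> where "\<phi> f = (f 1, f (k+2), f (k+3), restrict f {2..k+1})" for f :: "nat \<Rightarrow> nat"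
  define \<psi> where "\<psi> t = (\<lambda>x. if x = 1 then fst t else if x = k+2 then fst (snd t)
      else if x = k+3 then fst (snd (snd t)) else snd (snd (snd t)) x)" for t :: "nat \<times> nat \<times> nat \<times> (nat \<Rightarrow> nat)"
  have H: "homs (S21 k) G = {f \<in> {1..k+3} \<rightarrow>\<^sub>E V. (\<forall>j\<in>{2..k+2}. A (f 1) (f j)) \<and> A (f (k+2)) (f (k+3))}"
  proof -
    have eq: "(\<forall>u v. ((u = 1 \<and> 2 \<le> v \<and> v \<le> k+2) \<or> (v = 1 \<and> 2 \<le> u \<and> u \<le> k+2) \<or>
      (u = k+2 \<and> v = k+3) \<or> (u = k+3 \<and> v = k+2)) \<longrightarrow> A (f u) (f v)) \<longleftrightarrow>
      ((\<forall>j\<in>{2..k+2}. A (f 1) (f j)) \<and> A (f (k+2)) (f (k+3)))" for f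
    proof
      assume L: "\<forall>u v. ((u = 1 \<and> 2 \<le> v \<and> v \<le> k+2) \<or> (v = 1 \<and> 2 \<le> u \<and> u \<le> k+2) \<or>
        (u = k+2 \<and> v = k+3) \<or> (u = k+3 \<and> v = k+2)) \<longrightarrow> A (f u) (f v)"
      show "(\<forall>j\<in>{2..k+2}. A (f 1) (f j)) \<and> A (f (k+2)) (f (k+3))"
      proof (intro conjI ballI)
        fix j assume "j \<in> {2..k+2}" then show "A (f 1) (f j)" using L by simp
      next
        show "A (f (k+2)) (f (k+3))" using L by simp
      qed
    next
      assume R: "(\<forall>j\<in>{2..k+2}. A (f 1) (f j)) \<and> A (f (k+2)) (f (k+3))"
      show "\<forall>u v. ((u = 1 \<and> 2 \<le> v \<and> v \<le> k+2) \<or> (v = 1 \<and> 2 \<le> u \<and> u \<le> k+2) \<or>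
        (u = k+2 \<and> v = k+3) \<or> (u = k+3 \<and> v = k+2)) \<longrightarrow> A (f u) (f v)"
      proof (intro allI impI)
        fix u v assume "(u = 1 \<and> 2 \<le> v \<and> v \<le> k+2) \<or> (v = 1 \<and> 2 \<le> u \<and> u \<le> k+2) \<or>
          (u = k+2 \<and> v = k+3) \<or> (u = k+3 \<and> v = k+2)"
        then show "A (f u) (f v)"
        proof (elim disjE conjE)
          assume "u = 1" "2 \<le> v" "v \<le> k+2" then show ?thesis using R by simp
        next
          assume "v = 1" "2 \<le> u" "u \<le> k+2" then show ?thesis using R sym by simp
        next
          assume "u = k+2" "v = k+3" then show ?thesis using R by simp
        next
          assume "u = k+3" "v = k+2" then show ?thesis using R sym by simp
        qed
      qed
    qed
    show ?thesis unfolding homs_def S21_def G using eq by simp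
  qed
  have "bij_betw \<phi> (homs (S21 k) G) S"
  proof (rule bij_betw_byWitness[where f'=\<psi>])
    show "\<forall>a\<in>homs (S21 k) G. \<psi> (\<phi> a) = a"
    proof
      fix f assume f: "f \<in> homs (S21 k) G"
      show "\<psi> (\<phi> f) = f"
      proof
        fix x
        have fE: "f \<in> {1..k+3} \<rightarrow>\<^sub>E V" using f unfolding H by simp
        show "\<psi> (\<phi> f) x = f x"
        proof (cases "x \<in> {1..k+3}")
          case True then show ?thesis by (simp add: \<psi>_def \<phi>_def)
        next
          case False
          then have "f x = undefined" using fE by (intro PiE_arb)
          then show ?thesis using False by (auto simp: \<psi>_def \<phi>_def)
        qed
      qed
    qed
    show "\<forall>a'\<in>S. \<phi> (\<psi> a') = a'"
    proof
      fix t assume t: "t \<in> S"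
      obtain v w z g where tt: "t = (v, w, z, g)" by (cases t) auto
      have g: "g \<in> {2..k+1} \<rightarrow>\<^sub>E N v" using t tt by (simp add: S_def)
      have "restrict (\<psi> t) {2..k+1} = g"
      proof
        fix x show "restrict (\<psi> t) {2..k + 1} x = g x"
        proof (cases "x \<in> {2..k+1}")
          case True then show ?thesis by (auto simp: \<psi>_def tt)
        next
          case False
          then have "g x = undefined" using g by (intro PiE_arb)
          then show ?thesis using False by auto
        qed
      qed
      then show "\<phi> (\<psi> t) = t" by (simp add: \<phi>_def tt \<psi>_def)
    qed
    show "\<phi> ` homs (S21 k) G \<subseteq> S"
    proof
      fix y assume "y \<in> \<phi> ` homs (S21 k) G"
      then obtain f where f: "f \<in> homs (S21 k) G" and y: "y = \<phi> f" by auto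
      have f1: "f \<in> {1..k+3} \<rightarrow>\<^sub>E V" and f2: "\<forall>j\<in>{2..k+2}. A (f 1) (f j)"
        and f3: "A (f (k+2)) (f (k+3))" using f unfolding H by auto
      have "f 1 \<in> V" using f1 by auto
      moreover have e1: "A (f 1) (f (k+2))" using f2 by simp
      then have "f (k+2) \<in> N (f 1)" using inV[OF e1] by (simp add: N_def)
      moreover have "f (k+3) \<in> N (f (k+2))" using f3 inV[OF f3] by (simp add: N_def)
      moreover have "restrict f {2..k+1} \<in> {2..k+1} \<rightarrow>\<^sub>E N (f 1)"
      proof (rule restrict_PiE_iff[THEN iffD2], intro ballI)
        fix x assume "x \<in> {2..k+1}"
        then have "A (f 1) (f x)" using f2 by simp
        then show "f x \<in> N (f 1)" using inV by (simp add: N_def)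
      qed
      ultimately show "y \<in> S" by (simp add: y \<phi>_def S_def)
    qed
    show "\<psi> ` S \<subseteq> homs (S21 k) G"
    proof
      fix y assume "y \<in> \<psi> ` S"
      then obtain t where t: "t \<in> S" and y: "y = \<psi> t" by auto
      obtain v w z g where tt: "t = (v, w, z, g)" by (cases t) auto
      have v: "v \<in> V" and w: "w \<in> N v" and z: "z \<in> N w" and g: "g \<in> {2..k+1} \<rightarrow>\<^sub>E N v"
        using t tt by (auto simp: S_def)
      have gN: "\<And>x. x \<in> {2..k+1} \<Longrightarrow> g x \<in> N v" using g by auto
      have gU: "\<And>x. x \<notin> {2..k+1} \<Longrightarrow> g x = undefined" using g by (intro PiE_arb)
      have "y \<in> {1..k+3} \<rightarrow>\<^sub>E V"
      proof (rule PiE_I)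
        fix x assume "x \<in> {1..k+3}"
        then show "y x \<in> V" using v w z gN[of x] by (auto simp: y tt \<psi>_def N_def)
      next
        fix x assume "x \<notin> {1..k+3}"
        then show "y x = undefined" using gU[of x] by (auto simp: y tt \<psi>_def)
      qed
      moreover have "\<forall>j\<in>{2..k+2}. A (y 1) (y j)"
        using w gN by (auto simp: y tt \<psi>_def N_def)
      moreover have "A (y (k+2)) (y (k+3))" using z by (simp add: y tt \<psi>_def N_def)
      ultimately show "y \<in> homs (S21 k) G" unfolding H by simp
    qed
  qed
  then have "hom_count (S21 k) G = card S" by (simp add: hom_count_def bij_betw_same_card)
  also have "\<dots> = (\<Sum>v\<in>V. \<Sum>w\<in>N v. card (N w) * card (N v) ^ k)"
    unfolding S_def using fin finN
    by (simp add: card_cartesian_product card_PiE finite_PiE)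
  also have "\<dots> = (\<Sum>v\<in>V. card (N v) ^ k * (\<Sum>w\<in>N v. card (N w)))"
    by (simp add: sum_distrib_left mult.commute)
  finally show ?thesis by (simp add: G dg_def nbr_def N_def)
qed


definition dec3 :: "nat \<Rightarrow> nat \<times> nat \<times> nat" where
  "dec3 n = (fst (prod_decode n), prod_decode (snd (prod_decode n)))"

lemma bij_dec3: "bij dec3"
proof (rule bij_betw_byWitness[where f'="\<lambda>(a,b). prod_encode (a, prod_encode b)"])
  show "\<forall>a\<in>UNIV. (\<lambda>(a, b). prod_encode (a, prod_encode b)) (dec3 a) = a"
    by (simp add: dec3_def prod_decode_inverse)
  show "\<forall>a'\<in>UNIV. dec3 ((\<lambda>(a, b). prod_encode (a, prod_encode b)) a') = a'"
    by (auto simp: dec3_def prod_encode_inverse)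
qed auto

definition gr :: "(nat \<times> nat \<times> nat) set \<Rightarrow> (nat \<times> nat \<times> nat \<Rightarrow> nat \<times> nat \<times> nat \<Rightarrow> bool) \<Rightarrow> graph" where
  "gr W B = (dec3 -` W, \<lambda>u v. B (dec3 u) (dec3 v))"

definition NB where "NB W B x = {y \<in> W. B x y}"

lemma gr_simple:
  assumes "finite W" "\<And>x y. B x y \<Longrightarrow> x \<in> W \<and> y \<in> W \<and> B y x \<and> x \<noteq> y"
  shows "simple_graph (gr W B)"
proof -
  have "inj dec3" using bij_dec3 by (simp add: bij_is_inj)
  then have "finite (dec3 -` W)" using assms(1) by (simp add: finite_vimageI)
  moreover have "\<forall>u v. B (dec3 u) (dec3 v) \<longrightarrow> u \<in> dec3 -` W \<and> v \<in> dec3 -` W \<and> B (dec3 v) (dec3 u) \<and> u \<noteq> v"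
  proof (intro allI impI)
    fix u v assume "B (dec3 u) (dec3 v)"
    from assms(2)[OF this] show "u \<in> dec3 -` W \<and> v \<in> dec3 -` W \<and> B (dec3 v) (dec3 u) \<and> u \<noteq> v"
      by blast
  qed
  ultimately show ?thesis unfolding simple_graph_def gr_def by simp
qed

lemma sum_vimage_dec3: "(\<Sum>u\<in>dec3 -` W. f (dec3 u)) = (\<Sum>x\<in>W. f x)"
proof (rule sum.reindex_bij_betw)
  show "bij_betw dec3 (dec3 -` W) W"
  proof -
    have "inj dec3" "surj dec3" using bij_dec3 by (auto simp: bij_is_inj bij_is_surj)
    then show ?thesis unfolding bij_betw_def by (auto simp: image_vimage_eq intro: inj_on_subset[of _ UNIV])
  qed
qed

lemma card_vimage_dec3: "card (dec3 -` A) = card A"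
  using bij_dec3 by (simp add: card_vimage_inj bij_is_inj bij_is_surj)

lemma gr_S0: "hom_count S0 (gr W B) = card W"
  by (simp add: hom_S0 gr_def card_vimage_dec3)

lemma gr_S21:
  assumes "finite W" "\<And>x y. B x y \<Longrightarrow> x \<in> W \<and> y \<in> W \<and> B y x \<and> x \<noteq> y"
  shows "hom_count (S21 k) (gr W B) = (\<Sum>x\<in>W. card (NB W B x) ^ k * (\<Sum>y\<in>NB W B x. card (NB W B y)))"
proof -
  have nb: "nbr (gr W B) u = dec3 -` (NB W B (dec3 u))" for u
    by (auto simp: nbr_def gr_def NB_def)
  have dgs: "dg (gr W B) u = card (NB W B (dec3 u))" for u
    by (simp add: dg_def nb card_vimage_dec3)
  have "hom_count (S21 k) (gr W B) = (\<Sum>u\<in>dec3 -` W. card (NB W B (dec3 u)) ^ k *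
      (\<Sum>w\<in>dec3 -` (NB W B (dec3 u)). card (NB W B (dec3 w))))"
  proof -
    have fg: "fst (gr W B) = dec3 -` W" by (simp add: gr_def)
    have "hom_count (S21 k) (gr W B) = (\<Sum>v\<in>fst (gr W B). dg (gr W B) v ^ k * (\<Sum>w\<in>nbr (gr W B) v. dg (gr W B) w))" by (rule hom_S21[OF gr_simple[OF assms]])
    then show ?thesis by (simp add: fg dgs nb)
  qed
  also have "\<dots> = (\<Sum>u\<in>dec3 -` W. card (NB W B (dec3 u)) ^ k *
      (\<Sum>y\<in>NB W B (dec3 u). card (NB W B y)))"
    by (rule sum.cong[OF refl]) (simp add: sum_vimage_dec3[where f="\<lambda>y. card (NB W B y)"])
  also have "\<dots> = (\<Sum>x\<in>W. card (NB W B x) ^ k * (\<Sum>y\<in>NB W B x. card (NB W B y)))"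
    by (rule sum_vimage_dec3[where f="\<lambda>x. card (NB W B x) ^ k * (\<Sum>y\<in>NB W B x. card (NB W B y))"])
  finally show ?thesis .
qed




definition HW :: "nat \<Rightarrow> (nat \<Rightarrow> nat) \<Rightarrow> (nat \<Rightarrow> nat) \<Rightarrow> (nat \<Rightarrow> nat) \<Rightarrow> (nat \<times> nat \<times> nat) set" where
  "HW NC P Q R = (SIGMA c:{..<NC}. ({0} \<times> {..<P c}) \<union> (Suc ` {..<Q c}) \<times> {..<2 * R c})"

definition HB :: "nat \<Rightarrow> (nat \<Rightarrow> nat) \<Rightarrow> (nat \<Rightarrow> nat) \<Rightarrow> (nat \<Rightarrow> nat) \<Rightarrow> nat \<times> nat \<times> nat \<Rightarrow> nat \<times> nat \<times> nat \<Rightarrow> bool" where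
  "HB NC P Q R x y \<longleftrightarrow> x \<in> HW NC P Q R \<and> y \<in> HW NC P Q R \<and> fst x = fst y \<and>
    ((fst (snd x) = 0 \<and> fst (snd y) \<noteq> 0) \<or> (fst (snd x) \<noteq> 0 \<and> fst (snd y) = 0) \<or>
     (fst (snd x) \<noteq> 0 \<and> fst (snd x) = fst (snd y) \<and> (snd (snd x) < R (fst x) \<longleftrightarrow> \<not> snd (snd y) < R (fst x))))"

lemma HW_finite: "finite (HW NC P Q R)"
  unfolding HW_def by (intro finite_SigmaI) auto

lemma HB_prop: "HB NC P Q R x y \<Longrightarrow> x \<in> HW NC P Q R \<and> y \<in> HW NC P Q R \<and> HB NC P Q R y x \<and> x \<noteq> y"
  unfolding HB_def by auto

lemma HW_mem: "(c, s, b) \<in> HW NC P Q R \<longleftrightarrow> c < NC \<and> ((s = 0 \<and> b < P c) \<or> (s \<noteq> 0 \<and> s - 1 < Q c \<and> b < 2 * R c))"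
  unfolding HW_def by (cases s) auto

lemma NB_hub:
  assumes "(c, 0, a) \<in> HW NC P Q R"
  shows "NB (HW NC P Q R) (HB NC P Q R) (c, 0, a) = {c} \<times> (Suc ` {..<Q c} \<times> {..<2 * R c})"
proof -
  have "c < NC" using assms by (simp add: HW_mem)
  then show ?thesis using assms unfolding NB_def HB_def HW_def by auto
qed

definition side :: "nat \<Rightarrow> nat \<Rightarrow> nat set" where
  "side r b = {b'. b' < 2 * r \<and> (b' < r \<longleftrightarrow> \<not> b < r)}"

lemma card_side: "card (side r b) = r"
proof (cases "b < r")
  case True
  then have "side r b = {r..<2*r}" by (auto simp: side_def)
  then show ?thesis by simp
next
  case False
  then have "side r b = {..<r}" by (auto simp: side_def)
  then show ?thesis by simp
qed

lemma NB_Y: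
  assumes "(c, Suc s, b) \<in> HW NC P Q R"
  shows "NB (HW NC P Q R) (HB NC P Q R) (c, Suc s, b) = {c} \<times> ({0} \<times> {..<P c} \<union> {Suc s} \<times> side (R c) b)"
proof -
  have "c < NC" "s < Q c" "b < 2 * R c" using assms by (auto simp: HW_mem)
  then show ?thesis using assms unfolding NB_def HB_def HW_def side_def by auto
qed

definition dd :: "(nat \<Rightarrow> nat) \<Rightarrow> (nat \<Rightarrow> nat) \<Rightarrow> (nat \<Rightarrow> nat) \<Rightarrow> nat \<times> nat \<times> nat \<Rightarrow> nat" where
  "dd P Q R x = (if fst (snd x) = 0 then 2 * Q (fst x) * R (fst x) else P (fst x) + R (fst x))"

lemma card_NB:
  assumes "x \<in> HW NC P Q R"
  shows "card (NB (HW NC P Q R) (HB NC P Q R) x) = dd P Q R x"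
proof -
  obtain c s b where x: "x = (c, s, b)" by (cases x)
  show ?thesis
  proof (cases s)
    case 0
    then have "card (NB (HW NC P Q R) (HB NC P Q R) x) = card (Suc ` {..<Q c} \<times> {..<2 * R c})"
      using assms NB_hub x by (simp add: card_cartesian_product)
    also have "\<dots> = Q c * (2 * R c)" by (simp add: card_cartesian_product card_image)
    finally show ?thesis using 0 x by (simp add: dd_def)
  next
    case (Suc s')
    then have "NB (HW NC P Q R) (HB NC P Q R) x = {c} \<times> ({0} \<times> {..<P c} \<union> {Suc s'} \<times> side (R c) b)"
      using assms NB_Y x by simp
    moreover have "card ({0} \<times> {..<P c} \<union> {Suc s'} \<times> side (R c) b) = P c + R c"
    proof -
      have "finite (side (R c) b)" by (simp add: side_def)
      then show ?thesis by (subst card_Un_disjoint) (auto simp: card_cartesian_product card_side)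
    qed
    ultimately show ?thesis using Suc x by (simp add: dd_def card_cartesian_product)
  qed
qed




definition Tj :: "nat \<Rightarrow> nat \<Rightarrow> nat \<Rightarrow> nat \<Rightarrow> nat" where
  "Tj j P Q R = P * ((2*Q*R)^j * (2*Q*R*(P+R))) + 2*Q*R * ((P+R)^j * (P*(2*Q*R) + R*(P+R)))"

lemma sum_const_on: "(\<And>y. y \<in> A \<Longrightarrow> f y = k) \<Longrightarrow> sum f A = card A * (k::nat)"
  by simp

lemma hub_W_split: "HW NC P Q R = (SIGMA c:{..<NC}. ({0} \<times> {..<P c}) \<union> (Suc ` {..<Q c}) \<times> {..<2 * R c})"
  by (simp add: HW_def)

lemma hub_S0: "hom_count S0 (gr (HW NC P Q R) (HB NC P Q R)) = (\<Sum>c<NC. P c + 2 * Q c * R c)"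
proof -
  have "card (HW NC P Q R) = (\<Sum>c<NC. card ({0} \<times> {..<P c} \<union> Suc ` {..<Q c} \<times> {..<2 * R c}))"
    unfolding HW_def by (subst card_SigmaI) auto
  also have "\<dots> = (\<Sum>c<NC. P c + 2 * Q c * R c)"
  proof (rule sum.cong[OF refl])
    fix c
    show "card ({0} \<times> {..<P c} \<union> Suc ` {..<Q c} \<times> {..<2 * R c}) = P c + 2 * Q c * R c"
      by (subst card_Un_disjoint) (auto simp: card_cartesian_product card_image)
  qed
  finally show ?thesis by (simp add: gr_S0)
qed

lemma hub_S21: "hom_count (S21 j) (gr (HW NC P Q R) (HB NC P Q R)) = (\<Sum>c<NC. Tj j (P c) (Q c) (R c))"
proof -
  let ?W = "HW NC P Q R" and ?B = "HB NC P Q R"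
  define hv where "hv c = (2*Q c*R c)^j * (2*Q c*R c*(P c+R c))" for c
  define yv where "yv c = (P c+R c)^j * (P c*(2*Q c*R c) + R c*(P c+R c))" for c
  define g where "g x = (if fst (snd x) = 0 then hv (fst x) else yv (fst x))" for x :: "nat \<times> nat \<times> nat"
  have NBsub: "NB ?W ?B x \<subseteq> ?W" for x by (auto simp: NB_def)
  have summ: "card (NB ?W ?B x) ^ j * (\<Sum>y\<in>NB ?W ?B x. card (NB ?W ?B y)) = g x" if xW: "x \<in> ?W" for x
  proof -
    obtain c s b where x: "x = (c, s, b)" by (cases x)
    have inner: "(\<Sum>y\<in>NB ?W ?B x. card (NB ?W ?B y)) = (\<Sum>y\<in>NB ?W ?B x. dd P Q R y)"
    proof (rule sum.cong[OF refl])
      fix y assume "y \<in> NB ?W ?B x"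
      then have "y \<in> ?W" using NBsub[of x] by blast
      then show "card (NB ?W ?B y) = dd P Q R y" by (rule card_NB)
    qed
    show ?thesis
    proof (cases s)
      case 0
      have NBx: "NB ?W ?B x = {c} \<times> (Suc ` {..<Q c} \<times> {..<2 * R c})"
        using NB_hub xW x 0 by simp
      have "(\<Sum>y\<in>NB ?W ?B x. dd P Q R y) = card (NB ?W ?B x) * (P c + R c)"
        by (rule sum_const_on) (auto simp: NBx dd_def)
      also have "card (NB ?W ?B x) = 2 * Q c * R c" using card_NB[OF xW] x 0 by (simp add: dd_def)
      finally show ?thesis using card_NB[OF xW] x 0 inner by (simp add: dd_def g_def hv_def)
    next
      case (Suc s')
      have NBx: "NB ?W ?B x = {c} \<times> ({0} \<times> {..<P c} \<union> {Suc s'} \<times> side (R c) b)"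
        using NB_Y xW x Suc by simp
      have fs: "finite (side (R c) b)" by (simp add: side_def)
      have "(\<Sum>y\<in>NB ?W ?B x. dd P Q R y) = (\<Sum>y\<in>{c} \<times> ({0} \<times> {..<P c}) \<union> {c} \<times> ({Suc s'} \<times> side (R c) b). dd P Q R y)"
        unfolding NBx by (simp add: Sigma_Un_distrib2)
      also have "\<dots> = (\<Sum>y\<in>{c} \<times> ({0} \<times> {..<P c}). dd P Q R y) + (\<Sum>y\<in>{c} \<times> ({Suc s'} \<times> side (R c) b). dd P Q R y)"
        using fs by (intro sum.union_disjoint) auto
      also have "(\<Sum>y\<in>{c} \<times> ({0} \<times> {..<P c}). dd P Q R y) = card ({c} \<times> ({0::nat} \<times> {..<P c})) * (2 * Q c * R c)"
        by (rule sum_const_on) (auto simp: dd_def)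
      also have "(\<Sum>y\<in>{c} \<times> ({Suc s'} \<times> side (R c) b). dd P Q R y) = card ({c} \<times> ({Suc s'} \<times> side (R c) b)) * (P c + R c)"
        by (rule sum_const_on) (auto simp: dd_def)
      finally have "(\<Sum>y\<in>NB ?W ?B x. dd P Q R y) = P c * (2 * Q c * R c) + R c * (P c + R c)"
        by (simp add: card_cartesian_product card_side)
      then show ?thesis using card_NB[OF xW] x Suc inner by (simp add: dd_def g_def yv_def)
    qed
  qed
  have "hom_count (S21 j) (gr ?W ?B) = (\<Sum>x\<in>?W. g x)"
    by (simp add: gr_S21[OF HW_finite HB_prop] summ)
  also have "\<dots> = (\<Sum>c<NC. \<Sum>z\<in>{0} \<times> {..<P c} \<union> Suc ` {..<Q c} \<times> {..<2 * R c}. g (c, z))"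
    unfolding HW_def by (subst sum.Sigma) auto
  also have "\<dots> = (\<Sum>c<NC. Tj j (P c) (Q c) (R c))"
  proof (rule sum.cong[OF refl])
    fix c
    have "(\<Sum>z\<in>{0} \<times> {..<P c} \<union> Suc ` {..<Q c} \<times> {..<2 * R c}. g (c, z)) =
        (\<Sum>z\<in>{0} \<times> {..<P c}. g (c, z)) + (\<Sum>z\<in>Suc ` {..<Q c} \<times> {..<2 * R c}. g (c, z))"
      by (intro sum.union_disjoint) auto
    also have "(\<Sum>z\<in>{0} \<times> {..<P c}. g (c, z)) = card ({0::nat} \<times> {..<P c}) * hv c"
      by (rule sum_const_on) (auto simp: g_def)
    also have "(\<Sum>z\<in>Suc ` {..<Q c} \<times> {..<2 * R c}. g (c, z)) = card (Suc ` {..<Q c} \<times> {..<2 * R c}) * yv c"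
      by (rule sum_const_on) (auto simp: g_def)
    finally show "(\<Sum>z\<in>{0} \<times> {..<P c} \<union> Suc ` {..<Q c} \<times> {..<2 * R c}. g (c, z)) = Tj j (P c) (Q c) (R c)"
      by (simp add: card_cartesian_product card_image Tj_def hv_def yv_def algebra_simps)
  qed
  finally show ?thesis .
qed




definition tb :: "(nat \<Rightarrow> real) \<Rightarrow> real \<Rightarrow> bool" where
  "tb f e \<longleftrightarrow> (\<exists>c C. 0 < c \<and> 0 < C \<and> (\<forall>n\<ge>2. c * real n powr e \<le> f n \<and> f n \<le> C * real n powr e))"

lemma tb_pos: "tb f e \<Longrightarrow> 2 \<le> n \<Longrightarrow> 0 < f n"
proof -
  assume "tb f e" "2 \<le> n"
  then obtain c C where "0 < c" "c * real n powr e \<le> f n" unfolding tb_def by blast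
  moreover have "0 < real n powr e" using \<open>2 \<le> n\<close> by simp
  ultimately show "0 < f n" by (meson mult_pos_pos order_less_le_trans)
qed

lemma tb_cong: "tb f e \<Longrightarrow> (\<And>n. 2 \<le> n \<Longrightarrow> f n = g n) \<Longrightarrow> e = e' \<Longrightarrow> tb g e'"
  unfolding tb_def by auto

lemma tb_const: "0 < a \<Longrightarrow> tb (\<lambda>n. a) 0"
  unfolding tb_def by (rule exI[of _ a], rule exI[of _ a]) auto

lemma tb_npow: "tb (\<lambda>n. real n ^ j) (real j)"
  unfolding tb_def by (rule exI[of _ 1], rule exI[of _ 1]) (auto simp: powr_realpow)

lemma tb_mult:
  assumes "tb f a" "tb g b"
  shows "tb (\<lambda>n. f n * g n) (a + b)"
proof -
  obtain c1 C1 where 1: "0 < c1" "0 < C1" "\<And>n. n \<ge> 2 \<Longrightarrow> c1 * real n powr a \<le> f n \<and> f n \<le> C1 * real n powr a"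
    using assms(1) unfolding tb_def by blast
  obtain c2 C2 where 2: "0 < c2" "0 < C2" "\<And>n. n \<ge> 2 \<Longrightarrow> c2 * real n powr b \<le> g n \<and> g n \<le> C2 * real n powr b"
    using assms(2) unfolding tb_def by blast
  show ?thesis unfolding tb_def
  proof (intro exI conjI allI impI)
    show "0 < c1 * c2" "0 < C1 * C2" using 1 2 by auto
    fix n :: nat assume n: "2 \<le> n"
    have pa: "0 \<le> real n powr a" "0 \<le> real n powr b" by auto
    have e: "real n powr (a + b) = real n powr a * real n powr b" by (simp add: powr_add)
    have fp: "0 \<le> f n" "0 \<le> g n" using tb_pos[OF assms(1) n] tb_pos[OF assms(2) n] by auto
    have cp: "0 \<le> c1 * real n powr a" "0 \<le> C1 * real n powr a" "0 \<le> c2 * real n powr b" using 1 2 pa by auto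
    have "c1 * real n powr a * (c2 * real n powr b) \<le> f n * g n"
      using 1(3)[OF n] 2(3)[OF n] fp cp by (intro mult_mono) auto
    then show "c1 * c2 * real n powr (a + b) \<le> f n * g n" by (simp add: e algebra_simps)
    have "f n * g n \<le> C1 * real n powr a * (C2 * real n powr b)"
      using 1(3)[OF n] 2(3)[OF n] fp cp by (intro mult_mono) auto
    then show "f n * g n \<le> C1 * C2 * real n powr (a + b)" by (simp add: e algebra_simps)
  qed
qed

lemma tb_add:
  assumes "tb f a" "tb g b"
  shows "tb (\<lambda>n. f n + g n) (max a b)"
proof -
  obtain c1 C1 where 1: "0 < c1" "0 < C1" "\<And>n. n \<ge> 2 \<Longrightarrow> c1 * real n powr a \<le> f n \<and> f n \<le> C1 * real n powr a"
    using assms(1) unfolding tb_def by blast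
  obtain c2 C2 where 2: "0 < c2" "0 < C2" "\<And>n. n \<ge> 2 \<Longrightarrow> c2 * real n powr b \<le> g n \<and> g n \<le> C2 * real n powr b"
    using assms(2) unfolding tb_def by blast
  show ?thesis unfolding tb_def
  proof (intro exI conjI allI impI)
    show "0 < min c1 c2" "0 < C1 + C2" using 1 2 by auto
    fix n :: nat assume n: "2 \<le> n"
    have n1: "1 \<le> real n" using n by simp
    have ma: "real n powr a \<le> real n powr max a b" and mb: "real n powr b \<le> real n powr max a b"
      using n1 by (auto intro: powr_mono)
    have pa: "0 < real n powr a" "0 < real n powr b" using n by auto
    have fp: "0 \<le> f n" "0 \<le> g n" using tb_pos[OF assms(1) n] tb_pos[OF assms(2) n] by auto
    have "max a b = a \<or> max a b = b" by linarith
    then show "min c1 c2 * real n powr max a b \<le> f n + g n"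
    proof
      assume m: "max a b = a"
      have "min c1 c2 * real n powr a \<le> c1 * real n powr a"
        using pa by (intro mult_right_mono) auto
      then show ?thesis unfolding m using 1(3)[OF n] fp by linarith
    next
      assume m: "max a b = b"
      have "min c1 c2 * real n powr b \<le> c2 * real n powr b"
        using pa by (intro mult_right_mono) auto
      then show ?thesis unfolding m using 2(3)[OF n] fp by linarith
    qed
    have "C1 * real n powr a \<le> C1 * real n powr max a b" using ma 1 by simp
    moreover have "C2 * real n powr b \<le> C2 * real n powr max a b" using mb 2 by simp
    ultimately show "f n + g n \<le> (C1 + C2) * real n powr max a b"
      using 1(3)[OF n] 2(3)[OF n] by (simp add: algebra_simps)
  qed
qed

lemma tb_power:
  assumes "tb f a"
  shows "tb (\<lambda>n. f n ^ k) (real k * a)"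
proof (induction k)
  case 0
  then show ?case using tb_const[of 1] by simp
next
  case (Suc k)
  have "tb (\<lambda>n. f n * f n ^ k) (a + real k * a)" by (rule tb_mult[OF assms Suc])
  then show ?case by (rule tb_cong) (auto simp: algebra_simps)
qed

lemma tb_lim:
  assumes "tb f e"
  shows "((\<lambda>n. ln (f n) / ln (real n)) \<longlongrightarrow> e) sequentially"
proof -
  obtain c C where 1: "0 < c" "0 < C" "\<And>n. n \<ge> 2 \<Longrightarrow> c * real n powr e \<le> f n \<and> f n \<le> C * real n powr e"
    using assms unfolding tb_def by blast
  have lo: "e + ln c / ln (real n) \<le> ln (f n) / ln (real n)"
    and hi: "ln (f n) / ln (real n) \<le> e + ln C / ln (real n)" if n: "n \<ge> 2" for n
  proof -
    have ln: "0 < ln (real n)" using n by simp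
    have p: "0 < real n powr e" using n by simp
    have fp: "0 < f n" using tb_pos[OF assms n] .
    have "ln (c * real n powr e) \<le> ln (f n)" using 1(3)[OF n] 1 p fp by (subst ln_le_cancel_iff) auto
    then have "ln c + e * ln (real n) \<le> ln (f n)" using 1 p n by (simp add: ln_mult ln_powr)
    then have "(ln c + e * ln (real n)) / ln (real n) \<le> ln (f n) / ln (real n)"
      using ln by (intro divide_right_mono) auto
    moreover have "e + ln c / ln (real n) = (ln c + e * ln (real n)) / ln (real n)"
      using ln by (simp add: field_simps)
    ultimately show "e + ln c / ln (real n) \<le> ln (f n) / ln (real n)" by simp
    have "ln (f n) \<le> ln (C * real n powr e)" using 1(3)[OF n] 1 p fp
      by (subst ln_le_cancel_iff) auto
    then have "ln (f n) \<le> ln C + e * ln (real n)" using 1 p n by (simp add: ln_mult ln_powr)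
    then have "ln (f n) / ln (real n) \<le> (ln C + e * ln (real n)) / ln (real n)"
      using ln by (intro divide_right_mono) auto
    moreover have "e + ln C / ln (real n) = (ln C + e * ln (real n)) / ln (real n)"
      using ln by (simp add: field_simps)
    ultimately show "ln (f n) / ln (real n) \<le> e + ln C / ln (real n)" by simp
  qed
  have lninf: "filterlim (\<lambda>n. ln (real n)) at_infinity sequentially"
    by (rule filterlim_at_top_imp_at_infinity, rule filterlim_compose[OF ln_at_top filterlim_real_sequentially])
  have l0: "((\<lambda>n. ln a / ln (real n)) \<longlongrightarrow> 0) sequentially" for a
    by (rule tendsto_divide_0[OF tendsto_const lninf])
  have l1: "((\<lambda>n. e + ln c / ln (real n)) \<longlongrightarrow> e) sequentially"
    using tendsto_add[OF tendsto_const l0[of c], of e] by simp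
  have l2: "((\<lambda>n. e + ln C / ln (real n)) \<longlongrightarrow> e) sequentially"
    using tendsto_add[OF tendsto_const l0[of C], of e] by simp
  show ?thesis
    by (rule real_tendsto_sandwich[OF _ _ l1 l2]) (auto simp: eventually_sequentially intro!: exI[of _ 2] lo hi)
qed

lemma tendsto_fun_componentwise:
  fixes f :: "nat \<Rightarrow> nat \<Rightarrow> real"
  assumes "\<And>i. ((\<lambda>n. f n i) \<longlongrightarrow> l i) F"
  shows "(f \<longlongrightarrow> l) F"
proof -
  have "limitin (product_topology (\<lambda>_. euclidean) UNIV) f l F"
    using assms by (simp add: limitin_componentwise)
  then show ?thesis by (simp add: euclidean_product_topology)
qed

lemma trop_tb:
  assumes sg: "\<And>n. n \<ge> 2 \<Longrightarrow> simple_graph (G n)"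
    and tbk: "\<And>k. k \<le> m \<Longrightarrow> tb (\<lambda>n. hom_vec m (G n) k) (y k)"
  shows "trunc_vec m y \<in> trop_N_U m"
proof -
  define S where "S = log_vec m ` {x \<in> N_U m. \<forall>k\<le>m. 0 < x k}"
  define p where "p n = (\<lambda>k. (1 / ln (real n)) * log_vec m (hom_vec m (G n)) k)" for n
  have inS: "p n \<in> closure (conical_hull S)" if n: "n \<ge> 2" for n
  proof -
    have "hom_vec m (G n) \<in> {x \<in> N_U m. \<forall>k\<le>m. 0 < x k}"
    proof -
      have "hom_vec m (G n) \<in> N_U m" unfolding N_U_def using sg[OF n] by blast
      then show ?thesis using tb_pos[OF tbk n] by auto
    qed
    then have lv: "log_vec m (hom_vec m (G n)) \<in> S" unfolding S_def by blast
    have "p n \<in> conical_hull S" unfolding conical_hull_def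
    proof (intro CollectI exI conjI)
      show "finite {log_vec m (hom_vec m (G n))}" by simp
      show "{log_vec m (hom_vec m (G n))} \<subseteq> S" using lv by simp
      show "\<forall>v\<in>{log_vec m (hom_vec m (G n))}. 0 \<le> (\<lambda>_. 1 / ln (real n)) v" using n by simp
      show "p n = (\<lambda>k. \<Sum>v\<in>{log_vec m (hom_vec m (G n))}. (\<lambda>_. 1 / ln (real n)) v * v k)"
        by (simp add: p_def)
    qed
    then show ?thesis using closure_subset by blast
  qed
  have lim: "(p \<longlongrightarrow> trunc_vec m y) sequentially"
  proof (rule tendsto_fun_componentwise)
    fix k
    show "((\<lambda>n. p n k) \<longlongrightarrow> trunc_vec m y k) sequentially"
    proof (cases "k \<le> m")
      case True
      have "((\<lambda>n. ln (hom_vec m (G n) k) / ln (real n)) \<longlongrightarrow> y k) sequentially"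
        by (rule tb_lim[OF tbk[OF True]])
      then show ?thesis using True by (simp add: p_def log_vec_def trunc_vec_def)
    next
      case False
      then show ?thesis by (simp add: p_def log_vec_def trunc_vec_def)
    qed
  qed
  show ?thesis unfolding trop_N_U_def S_def[symmetric]
    by (rule Lim_in_closed_set[OF closed_closure _ _ lim])
       (auto simp: eventually_sequentially intro!: exI[of _ 2] inS)
qed




definition Pn :: "bool \<Rightarrow> nat \<Rightarrow> nat \<Rightarrow> nat" where
  "Pn h x n = (if h then n ^ x else 0)"

definition Ec :: "bool \<Rightarrow> nat \<Rightarrow> nat \<Rightarrow> nat \<Rightarrow> nat \<Rightarrow> real" where
  "Ec h x q r j = (if h then max (real x + real (j+1) * real q + real (j+2) * real r)
      (max (real x + 2 * real q + real (j+2) * real r) (real q + real (j+3) * real r))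
     else real q + real (j+3) * real r)"

definition Vc :: "bool \<Rightarrow> nat \<Rightarrow> nat \<Rightarrow> nat \<Rightarrow> real" where
  "Vc h x q r = (if h then max (real x) (real q + real r) else real q + real r)"

lemma tb_B: "tb (\<lambda>n. 2 * real n ^ q * real n ^ r) (real q + real r)"
proof -
  have "tb (\<lambda>n. 2 * real n ^ q * real n ^ r) (0 + real q + real r)"
    by (intro tb_mult tb_const tb_npow) auto
  then show ?thesis by simp
qed

lemma tb_comp:
  assumes "h \<Longrightarrow> x \<le> r"
  shows "tb (\<lambda>n. real (Tj j (Pn h x n) (n^q) (n^r))) (Ec h x q r j)"
proof (cases h)
  case True
  then have xr: "x \<le> r" using assms by simp
  have tD: "tb (\<lambda>n. real n ^ x + real n ^ r) (real r)"
    by (rule tb_cong[OF tb_add[OF tb_npow[of x] tb_npow[of r]]]) (use xr in auto)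
  have t1: "tb (\<lambda>n. real n ^ x * ((2 * real n ^ q * real n ^ r) ^ j * (2 * real n ^ q * real n ^ r * (real n ^ x + real n ^ r))))
     (real x + (real j * (real q + real r) + ((real q + real r) + real r)))"
    by (intro tb_B tD tb_npow tb_mult tb_power)
  have t2: "tb (\<lambda>n. 2 * real n ^ q * real n ^ r * ((real n ^ x + real n ^ r) ^ j * (real n ^ x * (2 * real n ^ q * real n ^ r) + real n ^ r * (real n ^ x + real n ^ r))))
     ((real q + real r) + (real j * real r + max (real x + (real q + real r)) (real r + real r)))"
    by (intro tb_B tD tb_npow tb_mult tb_power tb_add)
  show ?thesis
  proof (rule tb_cong[OF tb_add[OF t1 t2]])
    fix n :: nat
    show "real n ^ x * ((2 * real n ^ q * real n ^ r) ^ j * (2 * real n ^ q * real n ^ r * (real n ^ x + real n ^ r))) +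
          2 * real n ^ q * real n ^ r * ((real n ^ x + real n ^ r) ^ j * (real n ^ x * (2 * real n ^ q * real n ^ r) + real n ^ r * (real n ^ x + real n ^ r)))
        = real (Tj j (Pn h x n) (n ^ q) (n ^ r))"
      using True by (simp add: Tj_def Pn_def)
  next
    show "max (real x + (real j * (real q + real r) + (real q + real r + real r)))
      (real q + real r + (real j * real r + max (real x + (real q + real r)) (real r + real r))) = Ec h x q r j"
      using True by (simp add: Ec_def max_def algebra_simps)
  qed
next
  case False
  have t: "tb (\<lambda>n. 2 * real n ^ q * real n ^ r * ((real n ^ r) ^ j * (real n ^ r * real n ^ r)))
      ((real q + real r) + (real j * real r + (real r + real r)))"
    by (intro tb_B tb_npow tb_mult tb_power)
  show ?thesis
  proof (rule tb_cong[OF t])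
    fix n :: nat
    show "2 * real n ^ q * real n ^ r * ((real n ^ r) ^ j * (real n ^ r * real n ^ r)) = real (Tj j (Pn h x n) (n ^ q) (n ^ r))"
      using False by (simp add: Tj_def Pn_def)
  next
    show "real q + real r + (real j * real r + (real r + real r)) = Ec h x q r j"
      using False by (simp add: Ec_def algebra_simps)
  qed
qed

lemma tb_compV: "tb (\<lambda>n. real (Pn h x n + 2 * n^q * n^r)) (Vc h x q r)"
proof (cases h)
  case True
  show ?thesis by (rule tb_cong[OF tb_add[OF tb_npow[of x] tb_B[of q r]]]) (auto simp: Pn_def Vc_def True)
next
  case False
  show ?thesis by (rule tb_cong[OF tb_B[of q r]]) (auto simp: Pn_def Vc_def False)
qed




lemma sum3: "(\<Sum>c<(3::nat). f c) = f 0 + f 1 + (f 2 :: 'a :: comm_monoid_add)"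
  by (simp add: eval_nat_numeral add.assoc)

definition G3 :: "(nat \<Rightarrow> bool) \<Rightarrow> (nat \<Rightarrow> nat) \<Rightarrow> (nat \<Rightarrow> nat) \<Rightarrow> (nat \<Rightarrow> nat) \<Rightarrow> nat \<Rightarrow> graph" where
  "G3 hh xx qq rr n = gr (HW 3 (\<lambda>c. Pn (hh c) (xx c) n) (\<lambda>c. n ^ qq c) (\<lambda>c. n ^ rr c))
                         (HB 3 (\<lambda>c. Pn (hh c) (xx c) n) (\<lambda>c. n ^ qq c) (\<lambda>c. n ^ rr c))"

lemma main3:
  fixes hh :: "nat \<Rightarrow> bool" and xx qq rr :: "nat \<Rightarrow> nat" and y :: "nat \<Rightarrow> real"
  assumes xr: "\<And>c. c < 3 \<Longrightarrow> hh c \<Longrightarrow> xx c \<le> rr c"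
    and y0: "y 0 = max (max (Vc (hh 0) (xx 0) (qq 0) (rr 0)) (Vc (hh 1) (xx 1) (qq 1) (rr 1))) (Vc (hh 2) (xx 2) (qq 2) (rr 2))"
    and yS: "\<And>j. y (Suc j) = max (max (Ec (hh 0) (xx 0) (qq 0) (rr 0) j) (Ec (hh 1) (xx 1) (qq 1) (rr 1) j)) (Ec (hh 2) (xx 2) (qq 2) (rr 2) j)"
  shows "trunc_vec m y \<in> trop_N_U m"
proof (rule trop_tb[where G = "G3 hh xx qq rr"])
  fix n :: nat
  show "simple_graph (G3 hh xx qq rr n)" unfolding G3_def
    by (rule gr_simple[OF HW_finite HB_prop])
next
  fix k assume km: "k \<le> m"
  show "tb (\<lambda>n. hom_vec m (G3 hh xx qq rr n) k) (y k)"
  proof (cases k)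
    case 0
    have "tb (\<lambda>n. real (Pn (hh 0) (xx 0) n + 2 * n ^ qq 0 * n ^ rr 0) + real (Pn (hh 1) (xx 1) n + 2 * n ^ qq 1 * n ^ rr 1)
        + real (Pn (hh 2) (xx 2) n + 2 * n ^ qq 2 * n ^ rr 2)) (y 0)"
      unfolding y0 by (intro tb_add tb_compV)
    then show ?thesis
      by (rule tb_cong) (simp_all add: 0 hom_vec_def trunc_vec_def G3_def hub_S0 sum3)
  next
    case (Suc j)
    have "tb (\<lambda>n. real (Tj j (Pn (hh 0) (xx 0) n) (n ^ qq 0) (n ^ rr 0)) + real (Tj j (Pn (hh 1) (xx 1) n) (n ^ qq 1) (n ^ rr 1))
        + real (Tj j (Pn (hh 2) (xx 2) n) (n ^ qq 2) (n ^ rr 2))) (y (Suc j))"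
      unfolding yS by (intro tb_add tb_comp xr) auto
    then show ?thesis
      by (rule tb_cong) (use km in \<open>simp_all add: Suc hom_vec_def trunc_vec_def G3_def hub_S21 sum3\<close>)
  qed
qed



lemma s1_idS:
  fixes j :: nat
  shows "s1 (Suc j) = max (max (Ec (True) (0) (3) (0) j) (Ec (False) (0) (0) (2) j)) (Ec (False) (0) (0) (2) j)"
proof -
  have "j = 0 \<or> j = 1 \<or> 2 \<le> j" by arith
  moreover
  { assume "j = 0" then have ?thesis by (simp add: s1_def Ec_def max_def algebra_simps) }
  moreover
  { assume "j = 1" then have ?thesis by (simp add: s1_def Ec_def max_def algebra_simps) }
  moreover
  { assume a: "2 \<le> j"
    then have J: "2 \<le> real j" by auto
    have ?thesis using a J by (auto simp: s1_def Ec_def max_def algebra_simps) }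
  ultimately show ?thesis by blast
qed

lemma s1_id0: "s1 0 = max (max (Vc (True) (0) (3) (0)) (Vc (False) (0) (0) (2))) (Vc (False) (0) (0) (2))"
  by (simp add: s1_def Vc_def max_def)

lemma s1_in: "trunc_vec m s1 \<in> trop_N_U m"
  by (rule main3[where hh="(\<lambda>c. if c = 0 then True else if c = 1 then False else False)" and xx="(\<lambda>c. if c = 0 then 0 else if c = 1 then 0 else 0)" and qq="(\<lambda>c. if c = 0 then 3 else if c = 1 then 0 else 0)" and rr="(\<lambda>c. if c = 0 then 0 else if c = 1 then 2 else 2)"])
     (auto simp: s1_idS s1_id0)

lemma s2_idS:
  fixes j :: nat
  shows "s2 (Suc j) = max (max (Ec (True) (0) (3) (3) j) (Ec (False) (0) (0) (4) j)) (Ec (False) (0) (0) (4) j)"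
proof -
  have "j = 0 \<or> j = 1 \<or> 2 \<le> j" by arith
  moreover
  { assume "j = 0" then have ?thesis by (simp add: s2_def Ec_def max_def algebra_simps) }
  moreover
  { assume "j = 1" then have ?thesis by (simp add: s2_def Ec_def max_def algebra_simps) }
  moreover
  { assume a: "2 \<le> j"
    then have J: "2 \<le> real j" by auto
    have ?thesis using a J by (auto simp: s2_def Ec_def max_def algebra_simps) }
  ultimately show ?thesis by blast
qed

lemma s2_id0: "s2 0 = max (max (Vc (True) (0) (3) (3)) (Vc (False) (0) (0) (4))) (Vc (False) (0) (0) (4))"
  by (simp add: s2_def Vc_def max_def)

lemma s2_in: "trunc_vec m s2 \<in> trop_N_U m"
  by (rule main3[where hh="(\<lambda>c. if c = 0 then True else if c = 1 then False else False)" and xx="(\<lambda>c. if c = 0 then 0 else if c = 1 then 0 else 0)" and qq="(\<lambda>c. if c = 0 then 3 else if c = 1 then 0 else 0)" and rr="(\<lambda>c. if c = 0 then 3 else if c = 1 then 4 else 4)"])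
     (auto simp: s2_idS s2_id0)

lemma s3_idS:
  fixes j :: nat
  shows "s3 (Suc j) = max (max (Ec (True) (0) (2) (0) j) (Ec (False) (0) (1) (1) j)) (Ec (False) (0) (1) (1) j)"
proof -
  have "j = 0 \<or> j = 1 \<or> 2 \<le> j" by arith
  moreover
  { assume "j = 0" then have ?thesis by (simp add: s3_def Ec_def max_def algebra_simps) }
  moreover
  { assume "j = 1" then have ?thesis by (simp add: s3_def Ec_def max_def algebra_simps) }
  moreover
  { assume a: "2 \<le> j"
    then have J: "2 \<le> real j" by auto
    have ?thesis using a J by (auto simp: s3_def Ec_def max_def algebra_simps) }
  ultimately show ?thesis by blast
qed

lemma s3_id0: "s3 0 = max (max (Vc (True) (0) (2) (0)) (Vc (False) (0) (1) (1))) (Vc (False) (0) (1) (1))"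
  by (simp add: s3_def Vc_def max_def)

lemma s3_in: "trunc_vec m s3 \<in> trop_N_U m"
  by (rule main3[where hh="(\<lambda>c. if c = 0 then True else if c = 1 then False else False)" and xx="(\<lambda>c. if c = 0 then 0 else if c = 1 then 0 else 0)" and qq="(\<lambda>c. if c = 0 then 2 else if c = 1 then 1 else 1)" and rr="(\<lambda>c. if c = 0 then 0 else if c = 1 then 1 else 1)"])
     (auto simp: s3_idS s3_id0)

lemma s4_idS:
  fixes j :: nat
  shows "s4 (Suc j) = max (max (Ec (True) (0) (3) (0) j) (Ec (True) (0) (2) (1) j)) (Ec (False) (0) (0) (2) j)"
proof -
  have "j = 0 \<or> j = 1 \<or> 2 \<le> j" by arith
  moreover
  { assume "j = 0" then have ?thesis by (simp add: s4_def Ec_def max_def algebra_simps) }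
  moreover
  { assume "j = 1" then have ?thesis by (simp add: s4_def Ec_def max_def algebra_simps) }
  moreover
  { assume a: "2 \<le> j"
    then have J: "2 \<le> real j" by auto
    have ?thesis using a J by (auto simp: s4_def Ec_def max_def algebra_simps) }
  ultimately show ?thesis by blast
qed

lemma s4_id0: "s4 0 = max (max (Vc (True) (0) (3) (0)) (Vc (True) (0) (2) (1))) (Vc (False) (0) (0) (2))"
  by (simp add: s4_def Vc_def max_def)

lemma s4_in: "trunc_vec m s4 \<in> trop_N_U m"
  by (rule main3[where hh="(\<lambda>c. if c = 0 then True else if c = 1 then True else False)" and xx="(\<lambda>c. if c = 0 then 0 else if c = 1 then 0 else 0)" and qq="(\<lambda>c. if c = 0 then 3 else if c = 1 then 2 else 0)" and rr="(\<lambda>c. if c = 0 then 0 else if c = 1 then 1 else 2)"])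
     (auto simp: s4_idS s4_id0)

lemma r1_idS:
  fixes t j :: nat
  shows "r1 (t+5) (Suc j) = max (max (Ec (True) (0) (6*t+15) (0) j) (Ec (False) (0) (0) (4*t+10) j)) (Ec (True) (6) (3*t+3) (3*t+9) j)"
proof -
  have "j = 0 \<or> j = 1 \<or> (2 \<le> j \<and> j + 1 \<le> t + 5) \<or> t + 5 < j + 1" by arith
  moreover
  { assume "j = 0" then have ?thesis by (simp add: r1_def Ec_def max_def algebra_simps) }
  moreover
  { assume "j = 1" then have ?thesis by (simp add: r1_def Ec_def max_def algebra_simps) }
  moreover
  { assume a: "2 \<le> j \<and> j + 1 \<le> t + 5"
    then have J: "2 \<le> real j" "real j + 1 \<le> real t + 5" by auto
    have h1: "0 \<le> ((real t + 5) - 1 - real j) * (real j - 2)" using J by (intro mult_nonneg_nonneg) auto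
    have h2: "0 \<le> real t * (real j - 2)" using J by (intro mult_nonneg_nonneg) auto
    have h3: "0 \<le> real t * ((real t + 5) - 1 - real j)" using J by (intro mult_nonneg_nonneg) auto
    have ?thesis using a J h1 h2 h3 by (auto simp: r1_def Ec_def max_def algebra_simps) }
  moreover
  { assume a: "t + 5 < j + 1"
    then have J: "real t + 5 \<le> real j" by auto
    have h1: "0 \<le> (real j - real t - 5) * real t" using J by (intro mult_nonneg_nonneg) auto
    have h2: "0 \<le> (real j - real t - 5) * real j" using J by (intro mult_nonneg_nonneg) auto
    have h3: "0 \<le> real t * (real j - 5)" using J by (intro mult_nonneg_nonneg) auto
    have ?thesis using a J h1 h2 h3 by (auto simp: r1_def Ec_def max_def algebra_simps) }
  ultimately show ?thesis by blast
qed

lemma r1_id0: "r1 (t+5) 0 = max (max (Vc (True) (0) (6*t+15) (0)) (Vc (False) (0) (0) (4*t+10))) (Vc (True) (6) (3*t+3) (3*t+9))"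
  by (simp add: r1_def Vc_def max_def)

lemma r1_in:
  assumes "5 \<le> i"
  shows "trunc_vec m (r1 i) \<in> trop_N_U m"
proof -
  obtain t where i: "i = t + 5" using assms by (metis add.commute le_Suc_ex)
  show ?thesis unfolding i
    by (rule main3[where hh="(\<lambda>c. if c = 0 then True else if c = 1 then False else True)" and xx="(\<lambda>c. if c = 0 then 0 else if c = 1 then 0 else 6)" and qq="(\<lambda>c. if c = 0 then 6*t+15 else if c = 1 then 0 else 3*t+3)" and rr="(\<lambda>c. if c = 0 then 0 else if c = 1 then 4*t+10 else 3*t+9)"])
       (auto simp: r1_idS r1_id0)
qed

lemma r2_idS:
  fixes t j :: nat
  shows "r2 (t+5) (Suc j) = max (max (Ec (True) (0) (t+7) (0) j) (Ec (False) (0) (0) (t+5) j)) (Ec (False) (0) (0) (t+5) j)"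
proof -
  have "j = 0 \<or> j = 1 \<or> (2 \<le> j \<and> j + 1 \<le> t + 5) \<or> t + 5 < j + 1" by arith
  moreover
  { assume "j = 0" then have ?thesis by (simp add: r2_def Ec_def max_def algebra_simps) }
  moreover
  { assume "j = 1" then have ?thesis by (simp add: r2_def Ec_def max_def algebra_simps) }
  moreover
  { assume a: "2 \<le> j \<and> j + 1 \<le> t + 5"
    then have J: "2 \<le> real j" "real j + 1 \<le> real t + 5" by auto
    have h1: "0 \<le> ((real t + 5) - 1 - real j) * (real j - 2)" using J by (intro mult_nonneg_nonneg) auto
    have h2: "0 \<le> real t * (real j - 2)" using J by (intro mult_nonneg_nonneg) auto
    have h3: "0 \<le> real t * ((real t + 5) - 1 - real j)" using J by (intro mult_nonneg_nonneg) auto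
    have ?thesis using a J h1 h2 h3 by (auto simp: r2_def Ec_def max_def algebra_simps) }
  moreover
  { assume a: "t + 5 < j + 1"
    then have J: "real t + 5 \<le> real j" by auto
    have h1: "0 \<le> (real j - real t - 5) * real t" using J by (intro mult_nonneg_nonneg) auto
    have h2: "0 \<le> (real j - real t - 5) * real j" using J by (intro mult_nonneg_nonneg) auto
    have h3: "0 \<le> real t * (real j - 5)" using J by (intro mult_nonneg_nonneg) auto
    have ?thesis using a J h1 h2 h3 by (auto simp: r2_def Ec_def max_def algebra_simps) }
  ultimately show ?thesis by blast
qed

lemma r2_id0: "r2 (t+5) 0 = max (max (Vc (True) (0) (t+7) (0)) (Vc (False) (0) (0) (t+5))) (Vc (False) (0) (0) (t+5))"
  by (simp add: r2_def Vc_def max_def)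

lemma r2_in:
  assumes "5 \<le> i"
  shows "trunc_vec m (r2 i) \<in> trop_N_U m"
proof -
  obtain t where i: "i = t + 5" using assms by (metis add.commute le_Suc_ex)
  show ?thesis unfolding i
    by (rule main3[where hh="(\<lambda>c. if c = 0 then True else if c = 1 then False else False)" and xx="(\<lambda>c. if c = 0 then 0 else if c = 1 then 0 else 0)" and qq="(\<lambda>c. if c = 0 then t+7 else if c = 1 then 0 else 0)" and rr="(\<lambda>c. if c = 0 then 0 else if c = 1 then t+5 else t+5)"])
       (auto simp: r2_idS r2_id0)
qed

lemma r3_idS:
  fixes t j :: nat
  shows "r3 (t+5) (Suc j) = max (max (Ec (True) (0) (3*t+6) (0) j) (Ec (False) (0) (0) (2*t+4) j)) (Ec (True) (2) (2*t+2) (t+3) j)"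
proof -
  have "j = 0 \<or> j = 1 \<or> (2 \<le> j \<and> j + 1 \<le> t + 5) \<or> t + 5 < j + 1" by arith
  moreover
  { assume "j = 0" then have ?thesis by (simp add: r3_def Ec_def max_def algebra_simps) }
  moreover
  { assume "j = 1" then have ?thesis by (simp add: r3_def Ec_def max_def algebra_simps) }
  moreover
  { assume a: "2 \<le> j \<and> j + 1 \<le> t + 5"
    then have J: "2 \<le> real j" "real j + 1 \<le> real t + 5" by auto
    have h1: "0 \<le> ((real t + 5) - 1 - real j) * (real j - 2)" using J by (intro mult_nonneg_nonneg) auto
    have h2: "0 \<le> real t * (real j - 2)" using J by (intro mult_nonneg_nonneg) auto
    have h3: "0 \<le> real t * ((real t + 5) - 1 - real j)" using J by (intro mult_nonneg_nonneg) auto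
    have ?thesis using a J h1 h2 h3 by (auto simp: r3_def Ec_def max_def algebra_simps) }
  moreover
  { assume a: "t + 5 < j + 1"
    then have J: "real t + 5 \<le> real j" by auto
    have h1: "0 \<le> (real j - real t - 5) * real t" using J by (intro mult_nonneg_nonneg) auto
    have h2: "0 \<le> (real j - real t - 5) * real j" using J by (intro mult_nonneg_nonneg) auto
    have h3: "0 \<le> real t * (real j - 5)" using J by (intro mult_nonneg_nonneg) auto
    have ?thesis using a J h1 h2 h3 by (auto simp: r3_def Ec_def max_def algebra_simps) }
  ultimately show ?thesis by blast
qed

lemma r3_id0: "r3 (t+5) 0 = max (max (Vc (True) (0) (3*t+6) (0)) (Vc (False) (0) (0) (2*t+4))) (Vc (True) (2) (2*t+2) (t+3))"
  by (simp add: r3_def Vc_def max_def)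

lemma r3_in:
  assumes "5 \<le> i"
  shows "trunc_vec m (r3 i) \<in> trop_N_U m"
proof -
  obtain t where i: "i = t + 5" using assms by (metis add.commute le_Suc_ex)
  show ?thesis unfolding i
    by (rule main3[where hh="(\<lambda>c. if c = 0 then True else if c = 1 then False else True)" and xx="(\<lambda>c. if c = 0 then 0 else if c = 1 then 0 else 2)" and qq="(\<lambda>c. if c = 0 then 3*t+6 else if c = 1 then 0 else 2*t+2)" and rr="(\<lambda>c. if c = 0 then 0 else if c = 1 then 2*t+4 else t+3)"])
       (auto simp: r3_idS r3_id0)
qed

lemma r4_idS:
  fixes t j :: nat
  shows "r4 (t+5) (Suc j) = max (max (Ec (True) (0) (2*t+5) (0) j) (Ec (True) (2) (t+1) (t+3) j)) (Ec (True) (2) (t+1) (t+3) j)"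
proof -
  have "j = 0 \<or> j = 1 \<or> (2 \<le> j \<and> j + 1 \<le> t + 5) \<or> t + 5 < j + 1" by arith
  moreover
  { assume "j = 0" then have ?thesis by (simp add: r4_def Ec_def max_def algebra_simps) }
  moreover
  { assume "j = 1" then have ?thesis by (simp add: r4_def Ec_def max_def algebra_simps) }
  moreover
  { assume a: "2 \<le> j \<and> j + 1 \<le> t + 5"
    then have J: "2 \<le> real j" "real j + 1 \<le> real t + 5" by auto
    have h1: "0 \<le> ((real t + 5) - 1 - real j) * (real j - 2)" using J by (intro mult_nonneg_nonneg) auto
    have h2: "0 \<le> real t * (real j - 2)" using J by (intro mult_nonneg_nonneg) auto
    have h3: "0 \<le> real t * ((real t + 5) - 1 - real j)" using J by (intro mult_nonneg_nonneg) auto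
    have ?thesis using a J h1 h2 h3 by (auto simp: r4_def Ec_def max_def algebra_simps) }
  moreover
  { assume a: "t + 5 < j + 1"
    then have J: "real t + 5 \<le> real j" by auto
    have h1: "0 \<le> (real j - real t - 5) * real t" using J by (intro mult_nonneg_nonneg) auto
    have h2: "0 \<le> (real j - real t - 5) * real j" using J by (intro mult_nonneg_nonneg) auto
    have h3: "0 \<le> real t * (real j - 5)" using J by (intro mult_nonneg_nonneg) auto
    have ?thesis using a J h1 h2 h3 by (auto simp: r4_def Ec_def max_def algebra_simps) }
  ultimately show ?thesis by blast
qed

lemma r4_id0: "r4 (t+5) 0 = max (max (Vc (True) (0) (2*t+5) (0)) (Vc (True) (2) (t+1) (t+3))) (Vc (True) (2) (t+1) (t+3))"
  by (simp add: r4_def Vc_def max_def)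

lemma r4_in:
  assumes "5 \<le> i"
  shows "trunc_vec m (r4 i) \<in> trop_N_U m"
proof -
  obtain t where i: "i = t + 5" using assms by (metis add.commute le_Suc_ex)
  show ?thesis unfolding i
    by (rule main3[where hh="(\<lambda>c. if c = 0 then True else if c = 1 then True else True)" and xx="(\<lambda>c. if c = 0 then 0 else if c = 1 then 2 else 2)" and qq="(\<lambda>c. if c = 0 then 2*t+5 else if c = 1 then t+1 else t+1)" and rr="(\<lambda>c. if c = 0 then 0 else if c = 1 then t+3 else t+3)"])
       (auto simp: r4_idS r4_id0)
qed

lemma r5_idS:
  fixes t j :: nat
  shows "r5 (t+3) (Suc j) = max (max (Ec (True) (0) (1) (0) j) (Ec (False) (0) (t+3) (0) j)) (Ec (False) (0) (t+3) (0) j)"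
proof -
  have "j = 0 \<or> j = 1 \<or> (2 \<le> j \<and> j + 1 \<le> t + 3) \<or> t + 3 < j + 1" by arith
  moreover
  { assume "j = 0" then have ?thesis by (simp add: r5_def Ec_def max_def algebra_simps) }
  moreover
  { assume "j = 1" then have ?thesis by (simp add: r5_def Ec_def max_def algebra_simps) }
  moreover
  { assume a: "2 \<le> j \<and> j + 1 \<le> t + 3"
    then have J: "2 \<le> real j" "real j + 1 \<le> real t + 3" by auto
    have h1: "0 \<le> ((real t + 3) - 1 - real j) * (real j - 2)" using J by (intro mult_nonneg_nonneg) auto
    have h2: "0 \<le> real t * (real j - 2)" using J by (intro mult_nonneg_nonneg) auto
    have h3: "0 \<le> real t * ((real t + 3) - 1 - real j)" using J by (intro mult_nonneg_nonneg) auto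
    have ?thesis using a J h1 h2 h3 by (auto simp: r5_def Ec_def max_def algebra_simps) }
  moreover
  { assume a: "t + 3 < j + 1"
    then have J: "real t + 3 \<le> real j" by auto
    have h1: "0 \<le> (real j - real t - 3) * real t" using J by (intro mult_nonneg_nonneg) auto
    have h2: "0 \<le> (real j - real t - 3) * real j" using J by (intro mult_nonneg_nonneg) auto
    have h3: "0 \<le> real t * (real j - 3)" using J by (intro mult_nonneg_nonneg) auto
    have ?thesis using a J h1 h2 h3 by (auto simp: r5_def Ec_def max_def algebra_simps) }
  ultimately show ?thesis by blast
qed

lemma r5_id0: "r5 (t+3) 0 = max (max (Vc (True) (0) (1) (0)) (Vc (False) (0) (t+3) (0))) (Vc (False) (0) (t+3) (0))"
  by (simp add: r5_def Vc_def max_def)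

lemma r5_in:
  assumes "3 \<le> i"
  shows "trunc_vec m (r5 i) \<in> trop_N_U m"
proof -
  obtain t where i: "i = t + 3" using assms by (metis add.commute le_Suc_ex)
  show ?thesis unfolding i
    by (rule main3[where hh="(\<lambda>c. if c = 0 then True else if c = 1 then False else False)" and xx="(\<lambda>c. if c = 0 then 0 else if c = 1 then 0 else 0)" and qq="(\<lambda>c. if c = 0 then 1 else if c = 1 then t+3 else t+3)" and rr="(\<lambda>c. if c = 0 then 0 else if c = 1 then 0 else 0)"])
       (auto simp: r5_idS r5_id0)
qed

lemma r6_idS:
  fixes t j :: nat
  shows "r6 (t+4) (Suc j) = max (max (Ec (True) (0) (t+5) (0) j) (Ec (False) (0) (2) (t+3) j)) (Ec (False) (0) (2) (t+3) j)"
proof -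
  have "j = 0 \<or> j = 1 \<or> (2 \<le> j \<and> j + 1 \<le> t + 4) \<or> t + 4 < j + 1" by arith
  moreover
  { assume "j = 0" then have ?thesis by (simp add: r6_def Ec_def max_def algebra_simps) }
  moreover
  { assume "j = 1" then have ?thesis by (simp add: r6_def Ec_def max_def algebra_simps) }
  moreover
  { assume a: "2 \<le> j \<and> j + 1 \<le> t + 4"
    then have J: "2 \<le> real j" "real j + 1 \<le> real t + 4" by auto
    have h1: "0 \<le> ((real t + 4) - 1 - real j) * (real j - 2)" using J by (intro mult_nonneg_nonneg) auto
    have h2: "0 \<le> real t * (real j - 2)" using J by (intro mult_nonneg_nonneg) auto
    have h3: "0 \<le> real t * ((real t + 4) - 1 - real j)" using J by (intro mult_nonneg_nonneg) auto
    have ?thesis using a J h1 h2 h3 by (auto simp: r6_def Ec_def max_def algebra_simps) }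
  moreover
  { assume a: "t + 4 < j + 1"
    then have J: "real t + 4 \<le> real j" by auto
    have h1: "0 \<le> (real j - real t - 4) * real t" using J by (intro mult_nonneg_nonneg) auto
    have h2: "0 \<le> (real j - real t - 4) * real j" using J by (intro mult_nonneg_nonneg) auto
    have h3: "0 \<le> real t * (real j - 4)" using J by (intro mult_nonneg_nonneg) auto
    have ?thesis using a J h1 h2 h3 by (auto simp: r6_def Ec_def max_def algebra_simps) }
  ultimately show ?thesis by blast
qed

lemma r6_id0: "r6 (t+4) 0 = max (max (Vc (True) (0) (t+5) (0)) (Vc (False) (0) (2) (t+3))) (Vc (False) (0) (2) (t+3))"
  by (simp add: r6_def Vc_def max_def)

lemma r6_in:
  assumes "4 \<le> i"
  shows "trunc_vec m (r6 i) \<in> trop_N_U m"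
proof -
  obtain t where i: "i = t + 4" using assms by (metis add.commute le_Suc_ex)
  show ?thesis unfolding i
    by (rule main3[where hh="(\<lambda>c. if c = 0 then True else if c = 1 then False else False)" and xx="(\<lambda>c. if c = 0 then 0 else if c = 1 then 0 else 0)" and qq="(\<lambda>c. if c = 0 then t+5 else if c = 1 then 2 else 2)" and rr="(\<lambda>c. if c = 0 then 0 else if c = 1 then t+3 else t+3)"])
       (auto simp: r6_idS r6_id0)
qed

theorem lemma4p4:
  fixes m :: nat
  assumes "1 \<le> m"
  shows "trunc_vec m s1 \<in> trop_N_U m \<and> trunc_vec m s2 \<in> trop_N_U m \<and>
         trunc_vec m s3 \<in> trop_N_U m \<and> trunc_vec m s4 \<in> trop_N_U m \<and>
         (\<forall>i. 5 \<le> i \<and> i \<le> m - 1 \<longrightarrow> trunc_vec m (r1 i) \<in> trop_N_U m) \<and>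
         (\<forall>i. 5 \<le> i \<and> i \<le> m - 1 \<longrightarrow> trunc_vec m (r2 i) \<in> trop_N_U m) \<and>
         (\<forall>i. 5 \<le> i \<and> i \<le> m - 1 \<longrightarrow> trunc_vec m (r3 i) \<in> trop_N_U m) \<and>
         (\<forall>i. 5 \<le> i \<and> i \<le> m - 1 \<longrightarrow> trunc_vec m (r4 i) \<in> trop_N_U m) \<and>
         (\<forall>i. 3 \<le> i \<and> i \<le> m - 1 \<longrightarrow> trunc_vec m (r5 i) \<in> trop_N_U m) \<and>
         (\<forall>i. 4 \<le> i \<and> i \<le> m - 1 \<longrightarrow> trunc_vec m (r6 i) \<in> trop_N_U m)"
  using s1_in s2_in s3_in s4_in r1_in r2_in r3_in r4_in r5_in r6_in by blast

end
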